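(* Let $n\ge2$ and $p\in(0,1)$. The vector \[\psi_{\delta^{(n)}}=\sum_{\substack{w\in\mathfrak S_n\\ w^{-1}(1)<w^{-1}(n)}}\zeta_{\delta^{(n)}}(w,0)\,\big(e_{w^{-1}(1)}-e_{w^{-1}(n)}\big)\] is a positive scalar multiple of \[\sum_{1\le i<j\le n}\frac{(j-i)\,(2n-(i+j-1)p)}{(n-ip)(n-(i-1)p)(n-jp)(n-(j-1)p)}\,(e_i-e_j).\]
   Context: Type $A_{n-1}$ setting: $e_1,\dots,e_n$ is the standard basis of $\mathbb R^n$. $\mathfrak S_n$ is the symmetric group; for $i\in\mathbb Z/n\mathbb Z$, $\overline s_i\in\mathfrak S_n$ is the transposition swapping $i$ and $i+1$ (so $\overline s_0$ swaps $n$ and $1$), and $\overline s_iw$ denotes composition. For integers $k,k'$, $\mathfrak f_0(k,k')=1$ if $k>k'$ and $0$ otherwise. Let $\mathbf M_{\delta^{(n)}}$ be the Markov chain on $\mathfrak S_n\times\mathbb Z/n\mathbb Z$ with transition probabilities $\mathbb P((w,i)\to(\overline s_iw,i+1))=p\,\mathfrak f_0(w^{-1}(i),w^{-1}(i+1))$ and $\mathbb P((w,i)\to(w,i+1))=1-p\,\mathfrak f_0(w^{-1}(i),w^{-1}(i+1))$ (indices mod $n$, $w^{-1}(0):=w^{-1}(n)$, $w^{-1}(n+1):=w^{-1}(1)$), all others zero; $\zeta_{\delta^{(n)}}$ is its stationary distribution. (This chain is the toric projection of the affine Grassmannian reduced random combinatorial billiard trajectory in $\widetilde{\mathfrak S}_n$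 with initial direction $\delta^{(n)}=-ne_n+\sum_{j=1}^ne_j$, whose alcove word is $\cdots\mathsf c\mathsf c\mathsf c$ with $\mathsf c=s_{n-1}\cdots s_1s_0$, and $\psi_{\delta^{(n)}}$ is the vector governing the asymptotic direction of that trajectory.) *)

theory Defs
  imports Complex_Main "HOL-Combinatorics.Combinatorics"
begin

text \<open>Permutations of {1..n} are functions nat => nat with w permutes {1..n}.
  Elements of Z/nZ are represented by {0..<n}.\<close>

definition Sn :: "nat \<Rightarrow> (nat \<Rightarrow> nat) set" where
  "Sn n = {w. w permutes {1..n}}"

definition states :: "nat \<Rightarrow> ((nat \<Rightarrow> nat) \<times> nat) set" where
  "states n = Sn n \<times> {0..<n}"

definition f0 :: "nat \<Rightarrow> nat \<Rightarrow> real" where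
  "f0 k k' = (if k > k' then 1 else 0)"

text \<open>Representatives of i and i+1 in {1..n}: i (with 0 read as n) and i+1 (with n+1 read as 1).\<close>
definition lo :: "nat \<Rightarrow> nat \<Rightarrow> nat" where
  "lo n i = (if i = 0 then n else i)"

definition hi :: "nat \<Rightarrow> nat \<Rightarrow> nat" where
  "hi n i = i + 1"

definition sbar_comp :: "nat \<Rightarrow> nat \<Rightarrow> (nat \<Rightarrow> nat) \<Rightarrow> (nat \<Rightarrow> nat)" where
  "sbar_comp n i w = Transposition.transpose (lo n i) (hi n i) \<circ> w"

definition flipprob :: "real \<Rightarrow> nat \<Rightarrow> (nat \<Rightarrow> nat) \<Rightarrow> nat \<Rightarrow> real" where
  "flipprob p n w i = p * f0 (inv w (lo n i)) (inv w (hi n i))"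

definition trans_prob :: "real \<Rightarrow> nat \<Rightarrow> (nat \<Rightarrow> nat) \<times> nat \<Rightarrow> (nat \<Rightarrow> nat) \<times> nat \<Rightarrow> real" where
  "trans_prob p n x y =
     (let (w, i) = x; (w', i') = y in
      if i' = (i + 1) mod n then
        (if w' = sbar_comp n i w then flipprob p n w i
         else if w' = w then 1 - flipprob p n w i else 0)
      else 0)"

definition is_stationary :: "real \<Rightarrow> nat \<Rightarrow> ((nat \<Rightarrow> nat) \<times> nat \<Rightarrow> real) \<Rightarrow> bool" where
  "is_stationary p n \<zeta> \<longleftrightarrow>
     (\<forall>x\<in>states n. \<zeta> x \<ge> 0) \<and>
     (\<Sum>x\<in>states n. \<zeta> x) = 1 \<and>
     (\<forall>y\<in>states n. \<zeta> y = (\<Sum>x\<in>states n. \<zeta> x * trans_prob p n x y))"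

text \<open>Vectors in R^n are functions on {1..n}; e k is the k-th standard basis vector.\<close>
definition evec :: "nat \<Rightarrow> nat \<Rightarrow> real" where
  "evec k = (\<lambda>m. if m = k then 1 else 0)"

definition psi :: "nat \<Rightarrow> ((nat \<Rightarrow> nat) \<times> nat \<Rightarrow> real) \<Rightarrow> nat \<Rightarrow> real" where
  "psi n \<zeta> = (\<lambda>m. \<Sum>w\<in>{w\<in>Sn n. inv w 1 < inv w n}.
                    \<zeta> (w, 0) * (evec (inv w 1) m - evec (inv w n) m))"

definition target :: "real \<Rightarrow> nat \<Rightarrow> nat \<Rightarrow> real" where
  "target p n = (\<lambda>m. \<Sum>(i, j)\<in>{(i, j). 1 \<le> i \<and> i < j \<and> j \<le> n}.
      (real (j - i) * (2 * real n - real (i + j - 1) * p)) /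
      ((real n - real i * p) * (real n - real (i - 1) * p) *
       (real n - real j * p) * (real n - real (j - 1) * p))
      * (evec i m - evec j m))"

end

theory Submission
  imports Defs
begin


lemma tel_gen: "k \<le> (N::nat) \<Longrightarrow> (\<Sum>j\<in>{k<..N}. (F j - F (j-1)::real)) = F N - F k"
proof (induction N)
  case 0 then show ?case by simp
next
  case (Suc N)
  show ?case
  proof (cases "k = Suc N")
    case True then show ?thesis by simp
  next
    case False
    then have "k \<le> N" using Suc.prems by simp
    have "{k<..Suc N} = insert (Suc N) {k<..N}" using \<open>k \<le> N\<close> by auto
    then show ?thesis using Suc.IH[OF \<open>k \<le> N\<close>] by simp
  qed
qed

lemma Dpos: "n \<ge> 1 \<Longrightarrow> 0 < p \<Longrightarrow> p < 1 \<Longrightarrow> t \<le> n \<Longrightarrow> real n - real t * p > 0"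
proof -
  assume a: "n \<ge> 1" "0 < p" "p < 1" "t \<le> n"
  have "real t * p \<le> real t" using a by (simp add: mult_left_le)
  moreover have "real t * p < real n"
  proof (cases "t = 0")
    case True then show ?thesis using a by simp
  next
    case False then have "real t * p < real t" using a by simp
    then show ?thesis using a by linarith
  qed
  then show ?thesis by simp
qed

definition gg :: "real \<Rightarrow> nat \<Rightarrow> nat \<Rightarrow> nat \<Rightarrow> real" where
  "gg p n i j = real i * real j * (real j - real i) / (real n * (real n - real i * p) * (real n - real j * p))"

definition cc :: "real \<Rightarrow> nat \<Rightarrow> nat \<Rightarrow> nat \<Rightarrow> real" where
  "cc p n i j = (real (j - i) * (2 * real n - real (i + j - 1) * p)) /
      ((real n - real i * p) * (real n - real (i - 1) * p) *
       (real n - real j * p) * (real n - real (j - 1) * p))"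

lemma S1:
  fixes N u y Du C E :: real
  assumes "Du \<noteq> 0" "C \<noteq> 0" "E \<noteq> 0" "N \<noteq> 0"
  shows "u*(y+1)*((y+1)-u)/(N*Du*C) - u*y*(y-u)/(N*Du*E)
     = u*(((y+1)^2*E - y^2*C) - u*((y+1)*E - y*C))/(N*Du*C*E)"
  using assms by (simp add: field_simps) (simp add: algebra_simps power2_eq_square)
lemma S2:
  fixes N x W A B C E :: real
  assumes "A \<noteq> 0" "B \<noteq> 0" "C \<noteq> 0" "E \<noteq> 0" "N \<noteq> 0"
  shows "(x+1)*(W - (x+1)*N)/(N*A*C*E) - x*(W - x*N)/(N*B*C*E)
     = (W*((x+1)*B - x*A) - N*((x+1)^2*B - x^2*A))/(N*A*B*C*E)"
  using assms by (simp add: field_simps) (simp add: algebra_simps power2_eq_square)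

lemma ccalg:
  fixes N x y p A B C E :: real
  assumes nz: "A \<noteq> 0" "B \<noteq> 0" "C \<noteq> 0" "E \<noteq> 0" "N \<noteq> 0"
   and hA: "A = N - (x+1)*p" and hB: "B = N - x*p" and hC: "C = N - (y+1)*p" and hE: "E = N - y*p"
  shows "(y - x) * (2*N - (x+y+1)*p) / (A * B * C * E)
   = ((x+1)*(y+1)*((y+1)-(x+1))/(N*A*C) - (x+1)*y*(y-(x+1))/(N*A*E))
   - (x*(y+1)*((y+1)-x)/(N*B*C) - x*y*(y-x)/(N*B*E))"
proof -
  define W where "W = (y+1)^2*E - y^2*C"
  have r1: "(y+1)*E - y*C = N" unfolding hC hE by (simp add: algebra_simps)
  have r2: "(x+1)*B - x*A = N" unfolding hA hB by (simp add: algebra_simps)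
  have p1: "(x+1)*(y+1)*((y+1)-(x+1))/(N*A*C) - (x+1)*y*(y-(x+1))/(N*A*E) = (x+1)*(W - (x+1)*N)/(N*A*C*E)"
    using S1[OF nz(1,3,4,5), of "x+1" y] unfolding W_def r1 .
  have p2: "x*(y+1)*((y+1)-x)/(N*B*C) - x*y*(y-x)/(N*B*E) = x*(W - x*N)/(N*B*C*E)"
    using S1[OF nz(2,3,4,5), of x y] unfolding W_def r1 .
  have p3: "(x+1)*(W - (x+1)*N)/(N*A*C*E) - x*(W - x*N)/(N*B*C*E)
     = (W*N - N*((x+1)^2*B - x^2*A))/(N*A*B*C*E)"
    using S2[OF nz, of x W] unfolding r2 .
  have p4: "W*N - N*((x+1)^2*B - x^2*A) = N * ((y - x) * (2*N - (x+y+1)*p))"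
    unfolding W_def hA hB hC hE by (simp add: algebra_simps power2_eq_square)
  show ?thesis unfolding p1 p2 p3 p4 using nz by simp
qed

lemma cc_eq:
  assumes "n \<ge> 1" "0 < p" "p < 1" "1 \<le> i" "i < j" "j \<le> n"
  shows "cc p n i j = (gg p n i j - gg p n i (j-1)) - (gg p n (i-1) j - gg p n (i-1) (j-1))"
proof -
  obtain a where a: "i = Suc a" using assms by (cases i) auto
  obtain b where b: "j = Suc b" using assms by (cases j) auto
  have d1: "real n - (real a + 1) * p > 0" using Dpos[of n p "Suc a"] assms a by (simp add: algebra_simps)
  have d2: "real n - real a * p > 0" using Dpos[of n p a] assms a by simp
  have d3: "real n - (real b + 1) * p > 0" using Dpos[of n p "Suc b"] assms b by (simp add: algebra_simps)
  have d4: "real n - real b * p > 0" using Dpos[of n p b] assms b by simp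
  have n0: "real n > 0" using assms by simp
  have ab: "a < b" using assms a b by simp
  have e1: "real (Suc b - Suc a) = real b - real a" using ab by simp
  have e2: "real (Suc a + Suc b - 1) = real a + real b + 1" by simp
  have X: "real (Suc a) = real a + 1" "real (Suc b) = real b + 1" by simp_all
  have L2: "(real b - real a) * (2 * real n - (real a + real b + 1) * p) /
     ((real n - (real a + 1) * p) * (real n - real a * p) * (real n - (real b + 1) * p) * (real n - real b * p)) =
    ((real a + 1) * (real b + 1) * (real b + 1 - (real a + 1)) / (real n * (real n - (real a + 1) * p) * (real n - (real b + 1) * p)) -
     (real a + 1) * real b * (real b - (real a + 1)) / (real n * (real n - (real a + 1) * p) * (real n - real b * p))) -
    (real a * (real b + 1) * (real b + 1 - real a) / (real n * (real n - real a * p) * (real n - (real b + 1) * p)) -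
     real a * real b * (real b - real a) / (real n * (real n - real a * p) * (real n - real b * p)))"
    by (rule ccalg) (use d1 d2 d3 d4 n0 in linarith)+
  show ?thesis unfolding cc_def gg_def a b diff_Suc_1 e1 e2 X
    using L2 by (simp add: mult.assoc)
qed


lemma double_tel:
  assumes "n \<ge> 1" "0 < p" "p < 1" "k \<le> n"
  shows "(\<Sum>i\<in>{1..k}. \<Sum>j\<in>{k<..n}. cc p n i j) = gg p n k n"
proof -
  define H where "H i = gg p n i n - gg p n i k" for i
  have "(\<Sum>j\<in>{k<..n}. cc p n i j) = H i - H (i-1)" if i: "i \<in> {1..k}" for i
  proof -
    have "(\<Sum>j\<in>{k<..n}. cc p n i j) = (\<Sum>j\<in>{k<..n}. (gg p n i j - gg p n i (j-1)) - (gg p n (i-1) j - gg p n (i-1) (j-1)))"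
      by (rule sum.cong[OF refl], rule cc_eq) (use i assms in auto)
    also have "\<dots> = (\<Sum>j\<in>{k<..n}. gg p n i j - gg p n i (j-1)) - (\<Sum>j\<in>{k<..n}. gg p n (i-1) j - gg p n (i-1) (j-1))"
      by (rule sum_subtractf)
    also have "\<dots> = H i - H (i-1)"
      unfolding H_def using tel_gen[OF assms(4), of "gg p n i"] tel_gen[OF assms(4), of "gg p n (i-1)"] by simp
    finally show ?thesis .
  qed
  then have "(\<Sum>i\<in>{1..k}. \<Sum>j\<in>{k<..n}. cc p n i j) = (\<Sum>i\<in>{0<..k}. H i - H (i-1))"
    by (intro sum.cong) auto
  also have "\<dots> = H k - H 0" by (rule tel_gen) simp
  also have "\<dots> = gg p n k n" unfolding H_def gg_def by simp
  finally show ?thesis .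
qed

lemma target_eq: "target p n = (\<lambda>m. \<Sum>(i, j)\<in>{(i, j). 1 \<le> i \<and> i < j \<and> j \<le> n}. cc p n i j * (evec i m - evec j m))"
  unfolding target_def cc_def by simp

lemma pairs_finite: "finite {(i, j). 1 \<le> i \<and> i < j \<and> j \<le> (n::nat)}"
  by (rule finite_subset[of _ "{1..n} \<times> {1..n}"]) auto

lemma target_partial:
  assumes "n \<ge> 1" "0 < p" "p < 1" "k \<le> n"
  shows "(\<Sum>m=1..k. target p n m) = gg p n k n"
proof -
  let ?P = "{(i, j). 1 \<le> i \<and> i < j \<and> j \<le> n}"
  have "(\<Sum>m=1..k. target p n m) = (\<Sum>(i, j)\<in>?P. \<Sum>m=1..k. cc p n i j * (evec i m - evec j m))"
    unfolding target_eq by (subst sum.swap) (simp add: case_prod_beta)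
  also have "\<dots> = (\<Sum>(i, j)\<in>?P. if i \<le> k \<and> k < j then cc p n i j else 0)"
  proof (rule sum.cong, simp, clarify)
    fix i j assume ij: "1 \<le> i" "i < j" "j \<le> n"
    have "(\<Sum>m=1..k. cc p n i j * (evec i m - evec j m)) = cc p n i j * ((\<Sum>m=1..k. evec i m) - (\<Sum>m=1..k. evec j m))"
      by (simp add: sum_distrib_left sum_subtractf right_diff_distrib)
    also have "\<dots> = (if i \<le> k \<and> k < j then cc p n i j else 0)"
      unfolding evec_def using ij by (simp add: sum.delta)
    finally show "(\<Sum>m=1..k. cc p n i j * (evec i m - evec j m)) = (if i \<le> k \<and> k < j then cc p n i j else 0)" .
  qed
  also have "\<dots> = (\<Sum>(i, j)\<in>Sigma {1..k} (\<lambda>_. {k<..n}). cc p n i j)"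
    by (rule sum.mono_neutral_cong_right) (use pairs_finite assms in \<open>auto split: if_splits\<close>)
  also have "\<dots> = (\<Sum>i\<in>{1..k}. \<Sum>j\<in>{k<..n}. cc p n i j)"
    by (subst sum.Sigma) auto
  also have "\<dots> = gg p n k n" by (rule double_tel[OF assms])
  finally show ?thesis .
qed



lemma psi_partial:
  assumes "n \<ge> 1"
  shows "(\<Sum>m=1..k. psi n \<zeta> m) = (\<Sum>w\<in>{w\<in>Sn n. inv w 1 \<le> k \<and> k < inv w n}. \<zeta> (w, 0))"
proof -
  let ?W = "{w\<in>Sn n. inv w 1 < inv w n}"
  have fin: "finite (Sn n)" unfolding Sn_def by (rule finite_permutations) simp
  have rng: "inv w x \<in> {1..n}" if "w \<in> Sn n" "x \<in> {1..n}" for w x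
  proof -
    from that have "w permutes {1..n}" by (simp add: Sn_def)
    then have "inv w permutes {1..n}" by (rule permutes_inv)
    from permutes_in_image[OF this, of x] that(2) show ?thesis by simp
  qed
  have "(\<Sum>m=1..k. psi n \<zeta> m) = (\<Sum>w\<in>?W. \<Sum>m=1..k. \<zeta> (w, 0) * (evec (inv w 1) m - evec (inv w n) m))"
    unfolding psi_def by (rule sum.swap)
  also have "\<dots> = (\<Sum>w\<in>?W. if inv w 1 \<le> k \<and> k < inv w n then \<zeta> (w, 0) else 0)"
  proof (rule sum.cong[OF refl])
    fix w assume w: "w \<in> ?W"
    have a: "inv w 1 \<in> {1..n}" "inv w n \<in> {1..n}" using rng w assms by auto
    have "(\<Sum>m=1..k. \<zeta> (w, 0) * (evec (inv w 1) m - evec (inv w n) m))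
       = \<zeta> (w, 0) * ((\<Sum>m=1..k. evec (inv w 1) m) - (\<Sum>m=1..k. evec (inv w n) m))"
      by (simp add: sum_distrib_left sum_subtractf right_diff_distrib)
    also have "\<dots> = (if inv w 1 \<le> k \<and> k < inv w n then \<zeta> (w, 0) else 0)"
    proof -
      have d: "(\<Sum>m=1..k. evec c m) = (if c \<le> k then 1 else 0)" if "c \<ge> 1" for c
        unfolding evec_def using that by (simp add: sum.delta)
      have lt: "inv w 1 < inv w n" using w by simp
      show ?thesis using d[of "inv w 1"] d[of "inv w n"] a lt by auto
    qed
    finally show "(\<Sum>m=1..k. \<zeta> (w, 0) * (evec (inv w 1) m - evec (inv w n) m)) =
      (if inv w 1 \<le> k \<and> k < inv w n then \<zeta> (w, 0) else 0)" .
  qed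
  also have "\<dots> = (\<Sum>w\<in>{w\<in>Sn n. inv w 1 \<le> k \<and> k < inv w n}. \<zeta> (w, 0))"
    by (rule sum.mono_neutral_cong_right) (use fin in auto)
  finally show ?thesis .
qed



definition Ok :: "nat \<Rightarrow> nat \<Rightarrow> (nat \<Rightarrow> nat) \<Rightarrow> nat set" where
  "Ok n k w = {x\<in>{1..n}. inv w x > k}"

definition Pb :: "real \<Rightarrow> nat \<Rightarrow> nat set \<Rightarrow> nat \<Rightarrow> nat set \<Rightarrow> nat \<Rightarrow> real" where
  "Pb p n A i B j = (if j = (i + 1) mod n then
     (if lo n i \<in> A \<and> hi n i \<notin> A then
        (if B = A then 1 - p else if B = insert (hi n i) (A - {lo n i}) then p else 0)
      else (if B = A then 1 else 0)) else 0)"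

lemma lohi:
  assumes "n \<ge> 2" "i < n"
  shows "lo n i \<in> {1..n}" "hi n i \<in> {1..n}" "lo n i \<noteq> hi n i"
  using assms unfolding lo_def hi_def by auto

lemma sn_inv_range:
  assumes "w \<in> Sn n" "x \<in> {1..n}" shows "inv w x \<in> {1..n}"
proof -
  from assms have "w permutes {1..n}" by (simp add: Sn_def)
  then have "inv w permutes {1..n}" by (rule permutes_inv)
  from permutes_in_image[OF this, of x] assms(2) show ?thesis by simp
qed

lemma lump:
  assumes n2: "n \<ge> 2" and v: "v \<in> Sn n" and i: "i < n"
  shows "(\<Sum>w\<in>{w\<in>Sn n. Ok n k w = B}. trans_prob p n (v, i) (w, j)) = Pb p n (Ok n k v) i B j"
proof -
  define l where "l = lo n i"
  define h where "h = hi n i"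
  define \<tau> where "\<tau> = Transposition.transpose l h"
  define v' where "v' = \<tau> \<circ> v"
  define f where "f = flipprob p n v i"
  define Ov where "Ov = Ok n k v"
  have lh: "l \<in> {1..n}" "h \<in> {1..n}" "l \<noteq> h" using lohi[OF n2 i] l_def h_def by auto
  have vp: "v permutes {1..n}" using v by (simp add: Sn_def)
  have v'p: "v' permutes {1..n}" unfolding v'_def \<tau>_def
    by (rule permutes_compose[OF vp permutes_swap_id]) (use lh in auto)
  have v'S: "v' \<in> Sn n" using v'p by (simp add: Sn_def)
  have vv': "v' \<noteq> v"
  proof
    assume "v' = v"
    then have "\<tau> (v (inv v l)) = v (inv v l)" unfolding v'_def by (metis comp_apply)
    moreover have "v (inv v l) = l" using permutes_inverses(1)[OF vp] .
    ultimately show False using lh unfolding \<tau>_def by simp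
  qed
  have invv': "inv v' = inv v \<circ> \<tau>"
    unfolding v'_def \<tau>_def using o_inv_distrib[of "Transposition.transpose l h" v] permutes_bij[OF vp] by simp
  have Ov': "Ok n k v' = {x\<in>{1..n}. inv v (\<tau> x) > k}" unfolding Ok_def invv' by simp
  have tp: "trans_prob p n (v, i) (w, j) = (if j = (i + 1) mod n then (if w = v' then f else if w = v then 1 - f else 0) else 0)" for w
    unfolding trans_prob_def v'_def \<tau>_def f_def sbar_comp_def l_def h_def by simp
  show ?thesis
  proof (cases "j = (i + 1) mod n")
    case False
    then show ?thesis unfolding tp Pb_def by simp
  next
    case True
    have fin: "finite {w\<in>Sn n. Ok n k w = B}" unfolding Sn_def by (rule finite_subset[OF _ finite_permutations[of "{1..n}"]]) auto
    have "(\<Sum>w\<in>{w\<in>Sn n. Ok n k w = B}. trans_prob p n (v, i) (w, j))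
        = (\<Sum>w\<in>{w\<in>Sn n. Ok n k w = B}. (if w = v' then f else 0) + (if w = v then 1 - f else 0))"
      unfolding tp using True vv' by (intro sum.cong) auto
    also have "\<dots> = (if Ok n k v' = B then f else 0) + (if Ov = B then 1 - f else 0)"
      using fin v v'S unfolding Ov_def by (simp add: sum.distrib sum.delta)
    finally have S: "(\<Sum>w\<in>{w\<in>Sn n. Ok n k w = B}. trans_prob p n (v, i) (w, j)) =
       (if Ok n k v' = B then f else 0) + (if Ov = B then 1 - f else 0)" .
    have memO: "x \<in> Ov \<longleftrightarrow> inv v x > k" if "x \<in> {1..n}" for x using that unfolding Ov_def Ok_def by simp
    have memO2: "x \<in> Ov \<longleftrightarrow> x \<in> {1..n} \<and> inv v x > k" for x unfolding Ov_def Ok_def by simp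
    have tau: "\<tau> x = (if x = l then h else if x = h then l else x)" for x unfolding \<tau>_def transpose_def by simp
    show ?thesis
    proof (cases "l \<in> Ov \<and> h \<notin> Ov")
      case c1: True
      have ff: "f = p" unfolding f_def flipprob_def f0_def using c1 memO lh l_def h_def by auto
      have Ov': "Ok n k v' = insert h (Ov - {l})"
        unfolding Ov' using c1 lh by (auto simp: tau memO2)
      have ne: "insert h (Ov - {l}) \<noteq> Ov" using c1 by auto
      show ?thesis unfolding S Pb_def ff Ov' using True c1 ne unfolding Ov_def[symmetric] l_def[symmetric] h_def[symmetric] by auto
    next
      case c2: False
      have "(if Ok n k v' = B then f else 0) + (if Ov = B then 1 - f else 0) = (if B = Ov then 1 else 0)"
      proof (cases "l \<notin> Ov \<and> h \<in> Ov")
        case c3: True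
        have ff: "f = 0" unfolding f_def flipprob_def f0_def using c3 memO lh l_def h_def by auto
        show ?thesis unfolding ff by auto
      next
        case c4: False
        have Ov': "Ok n k v' = Ov"
          unfolding Ov' using c2 c4 memO lh by (auto simp: tau Ov_def Ok_def)
        show ?thesis unfolding Ov' by auto
      qed
      then show ?thesis unfolding S Pb_def using True c2 unfolding Ov_def[symmetric] l_def[symmetric] h_def[symmetric] by auto
    qed
  qed
qed



definition Bm :: "nat \<Rightarrow> nat \<Rightarrow> nat set set" where
  "Bm n k = {B. B \<subseteq> {1..n} \<and> card B = n - k}"

definition mu :: "nat \<Rightarrow> nat \<Rightarrow> ((nat \<Rightarrow> nat) \<times> nat \<Rightarrow> real) \<Rightarrow> nat set \<Rightarrow> nat \<Rightarrow> real" where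
  "mu n k \<zeta> B j = (\<Sum>w\<in>{w\<in>Sn n. Ok n k w = B}. \<zeta> (w, j))"

lemma finite_Sn: "finite (Sn n)" unfolding Sn_def by (rule finite_permutations) simp

lemma finite_Bm: "finite (Bm n k)"
  unfolding Bm_def by (rule finite_subset[of _ "Pow {1..n}"]) auto

lemma finite_states: "finite (states n)" unfolding states_def using finite_Sn by simp

lemma Ok_Bm:
  assumes v: "v \<in> Sn n" and k: "k \<le> n"
  shows "Ok n k v \<in> Bm n k"
proof -
  have vp: "v permutes {1..n}" using v by (simp add: Sn_def)
  have ivp: "inv v permutes {1..n}" by (rule permutes_inv[OF vp])
  have sub: "Ok n k v \<subseteq> {1..n}" unfolding Ok_def by auto
  have inj: "inj_on (inv v) (Ok n k v)" using permutes_inj_on[OF ivp] .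
  have img: "inv v ` Ok n k v = {k<..n}"
  proof
    show "inv v ` Ok n k v \<subseteq> {k<..n}"
      using sn_inv_range[OF v] unfolding Ok_def by fastforce
  next
    show "{k<..n} \<subseteq> inv v ` Ok n k v"
    proof
      fix y assume y: "y \<in> {k<..n}"
      have y1: "y \<in> {1..n}" using y by auto
      have "v y \<in> {1..n}" using permutes_in_image[OF vp, of y] y1 by simp
      moreover have "inv v (v y) = y" using permutes_inverses(2)[OF vp] .
      ultimately show "y \<in> inv v ` Ok n k v" unfolding Ok_def using y by (auto intro: image_eqI[of _ _ "v y"])
    qed
  qed
  have "card (Ok n k v) = n - k" using card_image[OF inj] img by simp
  then show ?thesis using sub unfolding Bm_def by simp
qed

lemma fiber_sum:
  assumes "i < n"
  shows "(\<Sum>x\<in>{x\<in>states n. (Ok n k (fst x), snd x) = (A, i)}. g x) = (\<Sum>w\<in>{w\<in>Sn n. Ok n k w = A}. g (w, i))"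
proof -
  have "{x\<in>states n. (Ok n k (fst x), snd x) = (A, i)} = (\<lambda>w. (w, i)) ` {w\<in>Sn n. Ok n k w = A}"
    using assms unfolding states_def by auto
  moreover have "inj_on (\<lambda>w. (w, i)) {w\<in>Sn n. Ok n k w = A}" by (auto simp: inj_on_def)
  ultimately show ?thesis by (simp add: sum.reindex)
qed

lemma group_states:
  assumes "k \<le> n"
  shows "(\<Sum>x\<in>states n. g x) = (\<Sum>y\<in>Bm n k \<times> {0..<n}. \<Sum>x\<in>{x\<in>states n. (Ok n k (fst x), snd x) = y}. g x)"
  by (rule sum.group[symmetric]) (use finite_states finite_Bm Ok_Bm assms in \<open>auto simp: states_def\<close>)

lemma mu_total:
  assumes "k \<le> n" "is_stationary p n \<zeta>"
  shows "(\<Sum>y\<in>Bm n k \<times> {0..<n}. mu n k \<zeta> (fst y) (snd y)) = 1"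
proof -
  have "(\<Sum>x\<in>states n. \<zeta> x) = 1" using assms(2) unfolding is_stationary_def by blast
  then have "1 = (\<Sum>x\<in>states n. \<zeta> x)" by simp
  also have "\<dots> = (\<Sum>y\<in>Bm n k \<times> {0..<n}. mu n k \<zeta> (fst y) (snd y))"
    unfolding group_states[OF assms(1)]
  proof (rule sum.cong[OF refl])
    fix y assume y: "y \<in> Bm n k \<times> {0..<n}"
    obtain A i where yA: "y = (A, i)" by (cases y)
    have i: "i < n" using y yA by auto
    show "(\<Sum>x\<in>{x\<in>states n. (Ok n k (fst x), snd x) = y}. \<zeta> x) = mu n k \<zeta> (fst y) (snd y)"
      unfolding yA fiber_sum[OF i] mu_def by simp
  qed
  finally show ?thesis by simp
qed

lemma mu_stat:
  assumes n2: "n \<ge> 2" and k: "k \<le> n" and st: "is_stationary p n \<zeta>" and j: "j < n"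
  shows "mu n k \<zeta> B j = (\<Sum>y\<in>Bm n k \<times> {0..<n}. mu n k \<zeta> (fst y) (snd y) * Pb p n (fst y) (snd y) B j)"
proof -
  let ?W = "{w\<in>Sn n. Ok n k w = B}"
  have eq: "\<zeta> (w, j) = (\<Sum>x\<in>states n. \<zeta> x * trans_prob p n x (w, j))" if "w \<in> Sn n" for w
  proof -
    have all: "\<forall>y\<in>states n. \<zeta> y = (\<Sum>x\<in>states n. \<zeta> x * trans_prob p n x y)"
      using st unfolding is_stationary_def by blast
    have "(w, j) \<in> states n" using that j unfolding states_def by simp
    from bspec[OF all this] show ?thesis .
  qed
  have "mu n k \<zeta> B j = (\<Sum>w\<in>?W. \<Sum>x\<in>states n. \<zeta> x * trans_prob p n x (w, j))"
    unfolding mu_def by (rule sum.cong[OF refl]) (simp add: eq)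
  also have "\<dots> = (\<Sum>x\<in>states n. \<zeta> x * (\<Sum>w\<in>?W. trans_prob p n x (w, j)))"
    by (subst sum.swap) (simp add: sum_distrib_left)
  also have "\<dots> = (\<Sum>x\<in>states n. \<zeta> x * Pb p n (Ok n k (fst x)) (snd x) B j)"
  proof (rule sum.cong[OF refl])
    fix x assume x: "x \<in> states n"
    obtain v i where xv: "x = (v, i)" by (cases x)
    have "v \<in> Sn n" "i < n" using x xv unfolding states_def by auto
    then have "(\<Sum>w\<in>?W. trans_prob p n (v, i) (w, j)) = Pb p n (Ok n k v) i B j"
      by (intro lump[OF n2])
    then show "\<zeta> x * (\<Sum>w\<in>?W. trans_prob p n x (w, j)) = \<zeta> x * Pb p n (Ok n k (fst x)) (snd x) B j"
      using xv by simp
  qed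
  also have "\<dots> = (\<Sum>y\<in>Bm n k \<times> {0..<n}. \<Sum>x\<in>{x\<in>states n. (Ok n k (fst x), snd x) = y}. \<zeta> x * Pb p n (Ok n k (fst x)) (snd x) B j)"
    by (rule group_states[OF k])
  also have "\<dots> = (\<Sum>y\<in>Bm n k \<times> {0..<n}. mu n k \<zeta> (fst y) (snd y) * Pb p n (fst y) (snd y) B j)"
  proof (rule sum.cong[OF refl])
    fix y assume y: "y \<in> Bm n k \<times> {0..<n}"
    obtain A i where yA: "y = (A, i)" by (cases y)
    have i: "i < n" using y yA by auto
    have "(\<Sum>x\<in>{x\<in>states n. (Ok n k (fst x), snd x) = y}. \<zeta> x * Pb p n (Ok n k (fst x)) (snd x) B j)
        = (\<Sum>x\<in>{x\<in>states n. (Ok n k (fst x), snd x) = y}. \<zeta> x * Pb p n A i B j)"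
      by (rule sum.cong[OF refl]) (auto simp: yA)
    also have "\<dots> = (\<Sum>x\<in>{x\<in>states n. (Ok n k (fst x), snd x) = y}. \<zeta> x) * Pb p n A i B j"
      by (simp add: sum_distrib_right)
    also have "\<dots> = mu n k \<zeta> A i * Pb p n A i B j"
      unfolding yA fiber_sum[OF i] mu_def by simp
    finally show "(\<Sum>x\<in>{x\<in>states n. (Ok n k (fst x), snd x) = y}. \<zeta> x * Pb p n (Ok n k (fst x)) (snd x) B j)
        = mu n k \<zeta> (fst y) (snd y) * Pb p n (fst y) (snd y) B j" using yA by simp
  qed
  finally show ?thesis .
qed



definition pre :: "nat \<Rightarrow> nat \<Rightarrow> nat" where
  "pre n j = (if j = 0 then n - 1 else j - 1)"

definition pib :: "real \<Rightarrow> nat \<Rightarrow> nat set \<Rightarrow> nat \<Rightarrow> real" where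
  "pib p n B i = (if lo n i \<in> B then 1 / (1 - p) else 1)"

definition bsum :: "real \<Rightarrow> nat \<Rightarrow> (nat set \<Rightarrow> nat \<Rightarrow> real) \<Rightarrow> nat set \<Rightarrow> nat \<Rightarrow> real" where
  "bsum p n f B j = (let i = pre n j; l = lo n i; h = hi n i in
     if l \<in> B \<and> h \<notin> B then (1 - p) * f B i
     else if l \<notin> B \<and> h \<in> B then f B i + p * f (insert l (B - {h})) i
     else f B i)"

lemma pre_props:
  assumes "n \<ge> 2" "j < n"
  shows "pre n j < n" "(pre n j + 1) mod n = j" "lo n j = hi n (pre n j)"
  using assms unfolding pre_def lo_def hi_def by auto

lemma pre_uniq:
  assumes "n \<ge> 2" "i < n" "j = (i + 1) mod n"
  shows "i = pre n j"
proof (cases "i + 1 < n")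
  case True then show ?thesis using assms unfolding pre_def by simp
next
  case False then have "i + 1 = n" using assms by simp
  then show ?thesis using assms unfolding pre_def by simp
qed

lemma back_sum:
  assumes n2: "n \<ge> 2" and B: "B \<in> Bm n k" and j: "j < n"
  shows "(\<Sum>y\<in>Bm n k \<times> {0..<n}. f (fst y) (snd y) * Pb p n (fst y) (snd y) B j) = bsum p n f B j"
proof -
  define i where "i = pre n j"
  define l where "l = lo n i"
  define h where "h = hi n i"
  define A' where "A' = insert l (B - {h})"
  have i: "i < n" "(i + 1) mod n = j" using pre_props[OF n2 j] i_def by auto
  have lh: "l \<in> {1..n}" "h \<in> {1..n}" "l \<noteq> h" using lohi[OF n2 i(1)] l_def h_def by auto
  define Supp where "Supp = {(B, i)} \<union> (if l \<notin> B \<and> h \<in> B then {(A', i)} else {})"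
  let ?g = "\<lambda>y. f (fst y) (snd y) * Pb p n (fst y) (snd y) B j"
  have BB: "B \<subseteq> {1..n}" "card B = n - k" using B unfolding Bm_def by auto
  have finB: "finite B" using BB(1) finite_subset by blast
  have A'Bm: "A' \<in> Bm n k" if "l \<notin> B" "h \<in> B"
  proof -
    have "card A' = card (B - {h}) + 1" unfolding A'_def using that lh finB by (simp add: card_insert_if)
    also have "\<dots> = card B" using that finB card_gt_0_iff[of B] by (auto simp: card_Diff_singleton)
    finally show ?thesis unfolding Bm_def A'_def using BB lh by auto
  qed
  have sub: "Supp \<subseteq> Bm n k \<times> {0..<n}" unfolding Supp_def using B i A'Bm by auto
  have zero: "?g y = 0" if y: "y \<in> Bm n k \<times> {0..<n} - Supp" for y
  proof (rule ccontr)
    assume nz: "?g y \<noteq> 0"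
    obtain A i' where yA: "y = (A, i')" by (cases y)
    have i': "i' < n" using y yA by auto
    have P: "Pb p n A i' B j \<noteq> 0" using nz yA by auto
    then have jj: "j = (i' + 1) mod n" unfolding Pb_def by (auto split: if_splits)
    then have ii: "i' = i" using pre_uniq[OF n2 i'] i_def by simp
    have "B = A \<or> (l \<in> A \<and> h \<notin> A \<and> B = insert h (A - {l}))"
      using P unfolding Pb_def ii l_def h_def by (auto split: if_splits)
    then show False
    proof
      assume "B = A" then show False using y yA ii unfolding Supp_def by auto
    next
      assume a: "l \<in> A \<and> h \<notin> A \<and> B = insert h (A - {l})"
      then have "l \<notin> B" "h \<in> B" using lh by auto
      moreover have "A = A'" unfolding A'_def using a lh by auto
      ultimately show False using y yA ii unfolding Supp_def by auto
    qed
  qed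
  have "(\<Sum>y\<in>Bm n k \<times> {0..<n}. ?g y) = (\<Sum>y\<in>Supp. ?g y)"
    by (rule sum.mono_neutral_right) (use finite_Bm sub zero in auto)
  also have "\<dots> = bsum p n f B j"
  proof (cases "l \<notin> B \<and> h \<in> B")
    case True
    have ne: "(A', i) \<noteq> (B, i)" using True unfolding A'_def by auto
    have S: "Supp = {(B, i), (A', i)}" unfolding Supp_def using True by auto
    have p1: "Pb p n B i B j = 1" unfolding Pb_def using True i l_def by auto
    have ins: "insert h (A' - {l}) = B" unfolding A'_def using True lh by auto
    have p2: "Pb p n A' i B j = p" unfolding Pb_def using True i lh ins ne
      unfolding l_def[symmetric] h_def[symmetric] A'_def by auto
    show ?thesis unfolding S using ne p1 p2 True
      unfolding bsum_def Let_def i_def[symmetric] l_def[symmetric] h_def[symmetric] A'_def[symmetric] by simp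
  next
    case False
    have S: "Supp = {(B, i)}" unfolding Supp_def using False by auto
    show ?thesis unfolding S using False i
      unfolding bsum_def Pb_def Let_def i_def[symmetric] by (auto simp: l_def h_def)
  qed
  finally show ?thesis .
qed

lemma pib_stat:
  assumes n2: "n \<ge> 2" and p1: "p < 1" and j: "j < n"
  shows "pib p n B j = bsum p n (pib p n) B j"
proof -
  define i where "i = pre n j"
  have e: "lo n j = hi n i" using pre_props[OF n2 j] i_def by simp
  have lh: "lo n i \<noteq> hi n i" using lohi[OF n2, of i] pre_props[OF n2 j] i_def by auto
  have q: "1 + p * (1 / (1 - p)) = 1 / (1 - p)" using p1 by (simp add: field_simps)
  show ?thesis unfolding bsum_def Let_def i_def[symmetric] pib_def e using lh q p1 by auto
qed



lemma dc:
  assumes fin: "finite B" and z: "0 \<notin> B" and cl: "\<And>x. 1 \<le> x \<Longrightarrow> x + 1 \<in> B \<Longrightarrow> x \<in> B"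
  shows "B = {1..card B}"
proof -
  have down: "\<forall>z. 1 \<le> z \<longrightarrow> z + d \<in> B \<longrightarrow> z \<in> B" for d
  proof (induction d)
    case 0 then show ?case by simp
  next
    case (Suc d)
    show ?case
    proof (intro allI impI)
      fix z assume a: "1 \<le> z" "z + Suc d \<in> B"
      then have "(z + 1) + d \<in> B" by simp
      moreover have "1 \<le> z + 1" by simp
      ultimately have "z + 1 \<in> B" using Suc.IH by blast
      then show "z \<in> B" using cl a by simp
    qed
  qed
  show ?thesis
  proof (cases "B = {}")
    case True then show ?thesis by simp
  next
    case False
    define M where "M = Max B"
    have MB: "M \<in> B" unfolding M_def using fin False by simp
    have le: "x \<le> M" if "x \<in> B" for x unfolding M_def using fin that by simp
    have "B = {1..M}"
    proof
      show "B \<subseteq> {1..M}" using le z by (auto simp: Suc_le_eq intro: gr0I)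
    next
      show "{1..M} \<subseteq> B"
      proof
        fix z assume zz: "z \<in> {1..M}"
        then have "z + (M - z) \<in> B" using MB by simp
        then show "z \<in> B" using down[of "M - z"] zz by auto
      qed
    qed
    then show ?thesis by simp
  qed
qed

lemma exists_hop:
  assumes sub: "B \<subseteq> {1..n}" and ne: "B \<noteq> {1..card B}"
  shows "\<exists>x. 1 \<le> x \<and> x < n \<and> x \<notin> B \<and> x + 1 \<in> B"
proof (rule ccontr)
  assume na: "\<not> ?thesis"
  have fin: "finite B" using sub finite_subset by blast
  have "B = {1..card B}"
  proof (rule dc[OF fin])
    show "0 \<notin> B" using sub by auto
  next
    fix x assume "1 \<le> x" "x + 1 \<in> B"
    moreover then have "x < n" using sub by auto
    ultimately show "x \<in> B" using na by blast
  qed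
  then show False using ne by simp
qed

lemma A'Bm:
  assumes "B \<in> Bm n k" "l \<notin> B" "h \<in> B" "l \<in> {1..n}"
  shows "insert l (B - {h}) \<in> Bm n k"
proof -
  have BB: "B \<subseteq> {1..n}" "card B = n - k" using assms unfolding Bm_def by auto
  have finB: "finite B" using BB(1) finite_subset by blast
  have "card (insert l (B - {h})) = card (B - {h}) + 1" using assms finB by (simp add: card_insert_if)
  also have "\<dots> = card B" using assms finB card_gt_0_iff[of B] by (auto simp: card_Diff_singleton)
  finally show ?thesis unfolding Bm_def using BB assms by auto
qed

lemma pib_pos: "p < 1 \<Longrightarrow> pib p n B i > 0" unfolding pib_def by simp

lemma maxC:
  assumes n2: "n \<ge> 2" and k: "k \<le> n" and p0: "0 < p" and p1: "p < 1"
    and eq: "\<And>B j. B \<in> Bm n k \<Longrightarrow> j < n \<Longrightarrow> mm B j = bsum p n mm B j"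
  shows "\<forall>B\<in>Bm n k. \<forall>j<n. mm B j / pib p n B j \<le> mm {1..n-k} 0 / pib p n {1..n-k} 0"
proof -
  define C where "C = {1..n-k}"
  define BS where "BS = Bm n k \<times> {0..<n}"
  define hh where "hh y = mm (fst y) (snd y) / pib p n (fst y) (snd y)" for y
  have CB: "C \<in> Bm n k" unfolding C_def Bm_def by simp
  have finBS: "finite BS" unfolding BS_def using finite_Bm by simp
  have neBS: "(C, 0) \<in> BS" unfolding BS_def using CB n2 by simp
  define H where "H = Max (hh ` BS)"
  have Hge: "hh y \<le> H" if "y \<in> BS" for y unfolding H_def using finBS that by simp
  have "H \<in> hh ` BS" unfolding H_def using finBS neBS by (intro Max_in) auto
  then obtain y0 where y0: "y0 \<in> BS" "hh y0 = H" by (auto simp: image_iff)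
  define E where "E B j \<longleftrightarrow> mm B j = H * pib p n B j" for B j
  have pp: "pib p n B j > 0" for B j using pib_pos[OF p1] .
  have L: "mm B j \<le> H * pib p n B j" if "B \<in> Bm n k" "j < n" for B j
    using Hge[of "(B, j)"] that pp[of B j] unfolding hh_def BS_def by (simp add: pos_divide_le_eq)
  have hhE: "hh (B, j) = H \<longleftrightarrow> E B j" for B j
    unfolding hh_def E_def using pp[of B j] by (auto simp: divide_eq_eq)
  have step: "E B (pre n j) \<and> (lo n (pre n j) \<notin> B \<and> hi n (pre n j) \<in> B \<longrightarrow> E (insert (lo n (pre n j)) (B - {hi n (pre n j)})) (pre n j))"
    if B: "B \<in> Bm n k" and j: "j < n" and e: "E B j" for B j
  proof -
    define i where "i = pre n j"
    define l where "l = lo n i"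
    define h where "h = hi n i"
    define A' where "A' = insert l (B - {h})"
    have i: "i < n" using pre_props[OF n2 j] i_def by simp
    have lh: "l \<in> {1..n}" using lohi[OF n2 i] l_def by simp
    have m1: "mm B j = bsum p n mm B j" by (rule eq[OF B j])
    have p2: "pib p n B j = bsum p n (pib p n) B j" by (rule pib_stat[OF n2 p1 j])
    have ej: "mm B j = H * pib p n B j" using e unfolding E_def .
    have LB: "mm B i \<le> H * pib p n B i" using L[OF B i] .
    consider (c1) "l \<in> B \<and> h \<notin> B" | (c2) "l \<notin> B \<and> h \<in> B" | (c3) "\<not> (l \<in> B \<and> h \<notin> B)" "\<not> (l \<notin> B \<and> h \<in> B)" by blast
    then show ?thesis
    proof cases
      case c1
      have "mm B j = (1 - p) * mm B i" "pib p n B j = (1 - p) * pib p n B i"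
        using m1 p2 c1 unfolding bsum_def Let_def i_def[symmetric] l_def[symmetric] h_def[symmetric] by auto
      then have "(1 - p) * mm B i = (1 - p) * (H * pib p n B i)" using ej by (simp add: algebra_simps)
      then have "E B i" unfolding E_def using p1 by simp
      then show ?thesis using c1 unfolding i_def[symmetric] l_def[symmetric] h_def[symmetric] by auto
    next
      case c2
      have A'B: "A' \<in> Bm n k" unfolding A'_def using A'Bm[OF B _ _ lh] c2 by simp
      have LA: "mm A' i \<le> H * pib p n A' i" using L[OF A'B i] .
      have "mm B j = mm B i + p * mm A' i" "pib p n B j = pib p n B i + p * pib p n A' i"
        using m1 p2 c2 unfolding bsum_def Let_def i_def[symmetric] l_def[symmetric] h_def[symmetric] A'_def by auto
      then have s: "mm B i + p * mm A' i = H * pib p n B i + p * (H * pib p n A' i)" using ej by (simp add: algebra_simps)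
      have "p * mm A' i \<le> p * (H * pib p n A' i)" using LA p0 by (simp add: mult_left_mono)
      then have e1: "mm B i = H * pib p n B i" using s LB by linarith
      then have "p * mm A' i = p * (H * pib p n A' i)" using s by linarith
      then have e2: "mm A' i = H * pib p n A' i" using p0 by simp
      show ?thesis using e1 e2 unfolding E_def i_def[symmetric] l_def[symmetric] h_def[symmetric] A'_def[symmetric] by simp
    next
      case c3
      have "mm B j = mm B i" "pib p n B j = pib p n B i"
        using m1 p2 c3 unfolding bsum_def Let_def i_def[symmetric] l_def[symmetric] h_def[symmetric] by auto
      then have "E B i" using ej unfolding E_def by simp
      then show ?thesis using c3 unfolding i_def[symmetric] l_def[symmetric] h_def[symmetric] by auto
    qed
  qed
  have down: "\<forall>d\<le>j. E B (j - d)" if B: "B \<in> Bm n k" and j: "j < n" and e: "E B j" for B j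
  proof
    fix d show "d \<le> j \<longrightarrow> E B (j - d)"
    proof (induction d)
      case 0 then show ?case using e by simp
    next
      case (Suc d)
      show ?case
      proof
        assume sd: "Suc d \<le> j"
        then have e': "E B (j - d)" using Suc.IH by simp
        have "pre n (j - d) = j - Suc d" unfolding pre_def using sd by simp
        then show "E B (j - Suc d)" using step[OF B _ e'] j by simp
      qed
    qed
  qed
  have allp: "\<forall>i<n. E B i" if B: "B \<in> Bm n k" and j: "j < n" and e: "E B j" for B j
  proof -
    have "E B 0" using down[OF B j e, rule_format, of j] by simp
    then have "E B (pre n 0)" using step[OF B _ ] n2 by simp
    then have "E B (n - 1)" unfolding pre_def by simp
    then have d: "\<forall>d\<le>n-1. E B (n - 1 - d)" using down[OF B, of "n - 1"] n2 by simp
    show ?thesis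
    proof (intro allI impI)
      fix i assume "i < n"
      then have "n - 1 - (n - 1 - i) = i" "n - 1 - i \<le> n - 1" by auto
      then show "E B i" using d by metis
    qed
  qed
  have hop: "\<forall>i<n. E (insert x (B - {x + 1})) i"
    if B: "B \<in> Bm n k" and e: "\<forall>i<n. E B i" and x: "1 \<le> x" "x < n" "x \<notin> B" "x + 1 \<in> B" for B x
  proof -
    define j where "j = (x + 1) mod n"
    have j: "j < n" unfolding j_def using n2 by simp
    have px: "pre n j = x" using pre_uniq[OF n2 x(2)] j_def by simp
    have lx: "lo n x = x" "hi n x = x + 1" unfolding lo_def hi_def using x by auto
    have "E (insert x (B - {x + 1})) x" using step[OF B j] e j x unfolding px lx by auto
    moreover have "insert x (B - {x + 1}) \<in> Bm n k" using A'Bm[OF B x(3) x(4)] x by simp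
    ultimately show ?thesis using allp x by blast
  qed
  have push: "\<forall>B\<in>Bm n k. sum id B = s \<longrightarrow> (\<forall>i<n. E B i) \<longrightarrow> (\<forall>i<n. E C i)" for s
  proof (induction s rule: less_induct)
    case (less s)
    show ?case
    proof (intro ballI impI)
      fix B assume B: "B \<in> Bm n k" and s: "sum id B = s" and e: "\<forall>i<n. E B i"
      have BB: "B \<subseteq> {1..n}" "card B = n - k" using B unfolding Bm_def by auto
      show "\<forall>i<n. E C i"
      proof (cases "B = {1..card B}")
        case True then show ?thesis using e BB unfolding C_def by simp
      next
        case False
        then obtain x where x: "1 \<le> x" "x < n" "x \<notin> B" "x + 1 \<in> B" using exists_hop[OF BB(1)] by blast
        define B' where "B' = insert x (B - {x + 1})"
        have B'm: "B' \<in> Bm n k" unfolding B'_def using A'Bm[OF B x(3) x(4)] x by simp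
        have finB: "finite B" using BB(1) finite_subset by blast
        have "sum id B' = x + (sum id B - (x + 1))"
          unfolding B'_def using finB x by (simp add: sum_diff1_nat)
        moreover have "sum id B \<ge> x + 1" using member_le_sum[of "x+1" B id] finB x(4) by simp
        ultimately have "sum id B' < s" using s by simp
        then show ?thesis using less.IH B'm hop[OF B e x] unfolding B'_def by blast
      qed
    qed
  qed
  obtain B0 j0 where y0': "y0 = (B0, j0)" by (cases y0)
  have B0: "B0 \<in> Bm n k" "j0 < n" using y0 y0' unfolding BS_def by auto
  have "E B0 j0" using y0 y0' hhE by simp
  then have "\<forall>i<n. E B0 i" using allp B0 by blast
  then have "E C 0" using push B0 n2 by auto
  then have hC: "hh (C, 0) = H" using hhE by simp
  show ?thesis
  proof (intro ballI allI impI)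
    fix B j assume "B \<in> Bm n k" "j < n"
    then have "hh (B, j) \<le> H" using Hge unfolding BS_def by simp
    then show "mm B j / pib p n B j \<le> mm {1..n-k} 0 / pib p n {1..n-k} 0"
      using hC unfolding hh_def C_def by simp
  qed
qed



lemma cnt_in:
  assumes "finite U" "x \<in> U"
  shows "card {B. B \<subseteq> U \<and> card B = Suc r \<and> x \<in> B} = card (U - {x}) choose r"
proof -
  have fin: "finite (U - {x})" using assms by simp
  have eq: "{B. B \<subseteq> U \<and> card B = Suc r \<and> x \<in> B} = insert x ` {B. B \<subseteq> U - {x} \<and> card B = r}"
  proof
    show "{B. B \<subseteq> U \<and> card B = Suc r \<and> x \<in> B} \<subseteq> insert x ` {B. B \<subseteq> U - {x} \<and> card B = r}"
    proof
      fix B assume B: "B \<in> {B. B \<subseteq> U \<and> card B = Suc r \<and> x \<in> B}"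
      have fB: "finite B" using B assms finite_subset by auto
      have "B = insert x (B - {x})" using B by auto
      moreover have "B - {x} \<subseteq> U - {x}" "card (B - {x}) = r" using B fB by auto
      ultimately show "B \<in> insert x ` {B. B \<subseteq> U - {x} \<and> card B = r}" by blast
    qed
  next
    show "insert x ` {B. B \<subseteq> U - {x} \<and> card B = r} \<subseteq> {B. B \<subseteq> U \<and> card B = Suc r \<and> x \<in> B}"
    proof
      fix A assume "A \<in> insert x ` {B. B \<subseteq> U - {x} \<and> card B = r}"
      then obtain B where B: "B \<subseteq> U - {x}" "card B = r" "A = insert x B" by auto
      have fB: "finite B" using B fin finite_subset by auto
      have "x \<notin> B" using B by auto
      then show "A \<in> {B. B \<subseteq> U \<and> card B = Suc r \<and> x \<in> B}" using B fB assms by auto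
    qed
  qed
  have inj: "inj_on (insert x) {B. B \<subseteq> U - {x} \<and> card B = r}"
    by (rule inj_onI) (metis Diff_insert_absorb Set.set_insert insert_Diff_single mem_Collect_eq subset_Diff_insert)
  show ?thesis unfolding eq card_image[OF inj] using n_subsets[OF fin] by simp
qed

lemma cnt_out:
  assumes "finite U" "x \<in> U"
  shows "card {B. B \<subseteq> U \<and> card B = r \<and> x \<notin> B} = card (U - {x}) choose r"
proof -
  have "{B. B \<subseteq> U \<and> card B = r \<and> x \<notin> B} = {B. B \<subseteq> U - {x} \<and> card B = r}" by auto
  then show ?thesis using n_subsets[of "U - {x}" r] assms by simp
qed

lemma fin_alg:
  fixes N10 N1 N0 k m n c p :: real
  assumes N10: "N10 > 0" and k: "k > 0" and m: "m > 0" and nn: "n = m + k" and n1: "n - 1 > 0"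
    and p0: "0 < p" and p1: "p < 1"
    and r1: "N1 * k = (n - 1) * N10" and r0: "N0 * m = (n - 1) * N10"
    and c: "c * (n * (N1 / (1 - p) + N0)) = 1"
  shows "c * (N10 / (1 - p)) = (1 - p) / (n - 1) * (k * n * m / (n * (n - k * p) * (n - n * p)))"
proof -
  have e1: "N1 = (n - 1) * N10 / k" using r1 k by (simp add: field_simps)
  have e0: "N0 = (n - 1) * N10 / m" using r0 m by (simp add: field_simps)
  have pos: "n - k * p > 0" using nn m k p1 p0
    by (smt (verit) mult_less_cancel_left2)
  have q: "N1 / (1 - p) + N0 = (n - 1) * N10 * (n - k * p) / ((1 - p) * k * m)"
    unfolding e1 e0 nn using k m p1 by (simp add: field_simps)
  have npos: "n > 0" using n1 by simp
  have Xpos: "n * (N1 / (1 - p) + N0) > 0" unfolding q using npos n1 N10 pos p1 k m by simp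
  have c1: "c = 1 / (n * (N1 / (1 - p) + N0))" using c Xpos by (simp add: eq_divide_eq del: mult_eq_0_iff divide_eq_0_iff)
  have cc: "c = (1 - p) * k * m / (n * (n - 1) * N10 * (n - k * p))"
    unfolding c1 q using N10 k m n1 pos p1 npos by (simp add: field_simps)
  have nnp: "n - n * p = n * (1 - p)" by (simp add: algebra_simps)
  have gen: "(q*k*m/(n*a*N*b))*(N/q) = q/a * (k*n*m/(n*b*(n*q)))"
    if "q \<noteq> 0" "a \<noteq> 0" "b \<noteq> 0" "N \<noteq> 0" "n \<noteq> 0" for q a b N :: real
    using that by (simp add: field_simps)
  show ?thesis unfolding cc nnp
    by (rule gen) (use N10 n1 pos p1 npos in auto)
qed

context
  fixes n k :: nat and p :: real and \<zeta> :: "(nat \<Rightarrow> nat) \<times> nat \<Rightarrow> real"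
  assumes n2: "n \<ge> 2" and p0: "0 < p" and p1: "p < 1" and k1: "1 \<le> k" and kn: "k < n"
    and st: "is_stationary p n \<zeta>"
begin

lemma mu_bsum: "B \<in> Bm n k \<Longrightarrow> j < n \<Longrightarrow> mu n k \<zeta> B j = bsum p n (mu n k \<zeta>) B j"
  using mu_stat[OF n2 _ st] back_sum[OF n2] kn by simp

lemma mu_const: "B \<in> Bm n k \<Longrightarrow> j < n \<Longrightarrow> mu n k \<zeta> B j = (mu n k \<zeta> {1..n-k} 0 / pib p n {1..n-k} 0) * pib p n B j"
proof -
  assume B: "B \<in> Bm n k" and j: "j < n"
  let ?c = "mu n k \<zeta> {1..n-k} 0 / pib p n {1..n-k} 0"
  have a: "mu n k \<zeta> B j / pib p n B j \<le> ?c"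
    using maxC[OF n2 _ p0 p1, of k "mu n k \<zeta>"] mu_bsum kn B j by auto
  have neg: "(\<lambda>B j. - mu n k \<zeta> B j) B' j' = bsum p n (\<lambda>B j. - mu n k \<zeta> B j) B' j'"
    if "B' \<in> Bm n k" "j' < n" for B' j'
    using mu_bsum[OF that] unfolding bsum_def Let_def by (simp add: algebra_simps)
  have b: "- mu n k \<zeta> B j / pib p n B j \<le> - mu n k \<zeta> {1..n-k} 0 / pib p n {1..n-k} 0"
    using maxC[OF n2 _ p0 p1, of k "\<lambda>B j. - mu n k \<zeta> B j"] neg kn B j by auto
  have "mu n k \<zeta> B j / pib p n B j = ?c" using a b by (simp add: divide_minus_left)
  then show ?thesis using pib_pos[OF p1, of n B j] by (simp add: divide_eq_eq)
qed


abbreviation "cst \<equiv> mu n k \<zeta> {1..n-k} 0 / pib p n {1..n-k} 0"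

lemma card_in: "x \<in> {1..n} \<Longrightarrow> card {B\<in>Bm n k. x \<in> B} = (n - 1) choose (n - k - 1)"
proof -
  assume x: "x \<in> {1..n}"
  have "{B\<in>Bm n k. x \<in> B} = {B. B \<subseteq> {1..n} \<and> card B = Suc (n - k - 1) \<and> x \<in> B}"
    unfolding Bm_def using kn by auto
  then show ?thesis using cnt_in[of "{1..n}" x "n - k - 1"] x by simp
qed

lemma card_out: "x \<in> {1..n} \<Longrightarrow> card {B\<in>Bm n k. x \<notin> B} = (n - 1) choose (n - k)"
proof -
  assume x: "x \<in> {1..n}"
  have "{B\<in>Bm n k. x \<notin> B} = {B. B \<subseteq> {1..n} \<and> card B = n - k \<and> x \<notin> B}"
    unfolding Bm_def by auto
  then show ?thesis using cnt_out[of "{1..n}" x "n - k"] x by simp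
qed

lemma card_10: "card {B\<in>Bm n k. n \<in> B \<and> 1 \<notin> B} = (n - 2) choose (n - k - 1)"
proof -
  have "{B\<in>Bm n k. n \<in> B \<and> 1 \<notin> B} = {B. B \<subseteq> {2..n} \<and> card B = Suc (n - k - 1) \<and> n \<in> B}"
  proof (rule set_eqI)
    fix B
    have sk: "Suc (n - k - 1) = n - k" using kn by simp
    have "B \<subseteq> {1..n} \<and> 1 \<notin> B \<longleftrightarrow> B \<subseteq> {2..n}"
    proof
      assume a: "B \<subseteq> {1..n} \<and> 1 \<notin> B"
      show "B \<subseteq> {2..n}"
      proof
        fix x assume "x \<in> B"
        then have "x \<in> {1..n}" "x \<noteq> 1" using a by auto
        then show "x \<in> {2..n}" by simp
      qed
    next
      assume "B \<subseteq> {2..n}" then show "B \<subseteq> {1..n} \<and> 1 \<notin> B" by auto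
    qed
    then show "B \<in> {B\<in>Bm n k. n \<in> B \<and> 1 \<notin> B} \<longleftrightarrow> B \<in> {B. B \<subseteq> {2..n} \<and> card B = Suc (n - k - 1) \<and> n \<in> B}"
      unfolding Bm_def sk by blast
  qed
  moreover have "{2..n} - {n} = {2..n-1}" using n2 by auto
  ultimately show ?thesis using cnt_in[of "{2..n}" n "n - k - 1"] n2 by simp
qed

lemma sum_pib: "(\<Sum>y\<in>Bm n k \<times> {0..<n}. pib p n (fst y) (snd y))
   = real n * (real ((n - 1) choose (n - k - 1)) / (1 - p) + real ((n - 1) choose (n - k)))"
proof -
  have fin: "finite (Bm n k)" by (rule finite_Bm)
  have per: "(\<Sum>B\<in>Bm n k. pib p n B i) = real ((n - 1) choose (n - k - 1)) / (1 - p) + real ((n - 1) choose (n - k))"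
    if i: "i < n" for i
  proof -
    have l: "lo n i \<in> {1..n}" using lohi[OF n2 i] by simp
    have "(\<Sum>B\<in>Bm n k. pib p n B i) = (\<Sum>B\<in>{B\<in>Bm n k. lo n i \<in> B}. 1 / (1 - p)) + (\<Sum>B\<in>{B\<in>Bm n k. lo n i \<notin> B}. 1)"
      unfolding pib_def using fin by (simp add: sum.If_cases Int_def)
    also have "\<dots> = real ((n - 1) choose (n - k - 1)) / (1 - p) + real ((n - 1) choose (n - k))"
      using card_in[OF l] card_out[OF l] by simp
    finally show ?thesis .
  qed
  have "(\<Sum>y\<in>Bm n k \<times> {0..<n}. pib p n (fst y) (snd y)) = (\<Sum>B\<in>Bm n k. \<Sum>i\<in>{0..<n}. pib p n B i)"
    by (simp add: sum.cartesian_product case_prod_beta)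
  also have "\<dots> = (\<Sum>i\<in>{0..<n}. \<Sum>B\<in>Bm n k. pib p n B i)" by (rule sum.swap)
  also have "\<dots> = (\<Sum>i\<in>{0..<n}. real ((n - 1) choose (n - k - 1)) / (1 - p) + real ((n - 1) choose (n - k)))"
    by (rule sum.cong) (auto simp: per)
  also have "\<dots> = real n * (real ((n - 1) choose (n - k - 1)) / (1 - p) + real ((n - 1) choose (n - k)))" by simp
  finally show ?thesis .
qed

lemma cst_eq: "cst * (real n * (real ((n - 1) choose (n - k - 1)) / (1 - p) + real ((n - 1) choose (n - k)))) = 1"
proof -
  have "1 = (\<Sum>y\<in>Bm n k \<times> {0..<n}. mu n k \<zeta> (fst y) (snd y))" using mu_total[OF _ st] kn by simp
  also have "\<dots> = (\<Sum>y\<in>Bm n k \<times> {0..<n}. cst * pib p n (fst y) (snd y))"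
    by (rule sum.cong) (auto simp: mu_const)
  also have "\<dots> = cst * (\<Sum>y\<in>Bm n k \<times> {0..<n}. pib p n (fst y) (snd y))" by (simp add: sum_distrib_left)
  finally have h: "cst * (\<Sum>y\<in>Bm n k \<times> {0..<n}. pib p n (fst y) (snd y)) = 1" by (rule sym)
  then show ?thesis by (simp only: sum_pib)
qed

lemma P_eq: "(\<Sum>w\<in>{w\<in>Sn n. inv w 1 \<le> k \<and> k < inv w n}. \<zeta> (w, 0)) = cst * (real ((n - 2) choose (n - k - 1)) / (1 - p))"
proof -
  let ?T = "{B\<in>Bm n k. n \<in> B \<and> 1 \<notin> B}"
  let ?S = "{w\<in>Sn n. inv w 1 \<le> k \<and> k < inv w n}"
  have S: "?S = {w\<in>Sn n. Ok n k w \<in> ?T}"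
  proof -
    have "inv w 1 \<le> k \<and> k < inv w n \<longleftrightarrow> Ok n k w \<in> ?T" if w: "w \<in> Sn n" for w
      using Ok_Bm[OF w] kn n2 unfolding Ok_def by auto
    then show ?thesis by auto
  qed
  have "(\<Sum>w\<in>?S. \<zeta> (w, 0)) = (\<Sum>B\<in>?T. \<Sum>w\<in>{w\<in>{w\<in>Sn n. Ok n k w \<in> ?T}. Ok n k w = B}. \<zeta> (w, 0))"
    unfolding S by (rule sum.group[symmetric]) (use finite_Sn finite_Bm in auto)
  also have "\<dots> = (\<Sum>B\<in>?T. mu n k \<zeta> B 0)"
    unfolding mu_def by (rule sum.cong[OF refl]) (rule sum.cong, auto)
  also have "\<dots> = (\<Sum>B\<in>?T. cst * (1 / (1 - p)))"
  proof (rule sum.cong[OF refl])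
    fix B assume B: "B \<in> ?T"
    have "lo n 0 \<in> B" using B unfolding lo_def by simp
    then show "mu n k \<zeta> B 0 = cst * (1 / (1 - p))" using mu_const[of B 0] B n2 unfolding pib_def by simp
  qed
  also have "\<dots> = cst * (real ((n - 2) choose (n - k - 1)) / (1 - p))" using card_10 by simp
  finally show ?thesis .
qed

lemma main_k: "(\<Sum>m=1..k. psi n \<zeta> m) = (1 - p) / (real n - 1) * gg p n k n"
proof -
  define N10 where "N10 = real ((n - 2) choose (n - k - 1))"
  define N1 where "N1 = real ((n - 1) choose (n - k - 1))"
  define N0 where "N0 = real ((n - 1) choose (n - k))"
  have nk: "n - 1 - (n - k - 1) = k" using k1 kn by simp
  have r1': "k * ((n - 1) choose (n - k - 1)) = (n - 1) * ((n - 1 - 1) choose (n - k - 1))"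
    using binomial_absorb_comp[of "n - 1" "n - k - 1"] unfolding nk .
  have sk: "Suc (n - k - 1) = n - k" using kn by simp
  have r0': "(n - k) * ((n - 1) choose (n - k)) = (n - 1) * ((n - 1 - 1) choose (n - k - 1))"
    using binomial_absorption[of "n - k - 1" "n - 1"] unfolding sk .
  have e2: "n - 1 - 1 = n - 2" by simp
  have r1: "N1 * real k = (real n - 1) * N10"
    using arg_cong[OF r1', of real] n2 unfolding N1_def N10_def e2 by (simp add: of_nat_diff mult.commute)
  have r0: "N0 * (real n - real k) = (real n - 1) * N10"
    using arg_cong[OF r0', of real] n2 kn unfolding N0_def N10_def e2 by (simp add: of_nat_diff) (metis mult.commute)
  have N10p: "N10 > 0" unfolding N10_def using kn k1 by simp
  have c: "cst * (real n * (N1 / (1 - p) + N0)) = 1" using cst_eq unfolding N1_def N0_def .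
  have "(\<Sum>m=1..k. psi n \<zeta> m) = cst * (N10 / (1 - p))"
    using psi_partial[where n=n and k=k and \<zeta>=\<zeta>] P_eq n2 unfolding N10_def by simp
  also have "\<dots> = (1 - p) / (real n - 1) * (real k * real n * (real n - real k) / (real n * (real n - real k * p) * (real n - real n * p)))"
    by (rule fin_alg[OF N10p _ _ _ _ p0 p1 r1 r0 c]) (use k1 kn n2 in auto)
  also have "\<dots> = (1 - p) / (real n - 1) * gg p n k n" unfolding gg_def by simp
  finally show ?thesis .
qed

end


theorem theorem1p5:
  fixes n :: nat and p :: real and \<zeta> :: "(nat \<Rightarrow> nat) \<times> nat \<Rightarrow> real"
  assumes "n \<ge> 2" and "0 < p" and "p < 1"
    and "is_stationary p n \<zeta>"
  shows "\<exists>c>0. \<forall>m\<in>{1..n}. psi n \<zeta> m = c * target p n m"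
proof -
  note n2 = assms(1) and p0 = assms(2) and p1 = assms(3) and st = assms(4)
  define c0 where "c0 = (1 - p) / (real n - 1)"
  have c0: "c0 > 0" unfolding c0_def using n2 p1 by simp
  have Pk: "(\<Sum>m=1..t. psi n \<zeta> m) = c0 * (\<Sum>m=1..t. target p n m)" if t: "t \<le> n" for t
  proof -
    have T: "(\<Sum>m=1..t. target p n m) = gg p n t n" using target_partial[of n p t] n2 p0 p1 t by simp
    consider (z) "t = 0" | (f) "t = n" | (m) "1 \<le> t" "t < n" using t by linarith
    then show ?thesis
    proof cases
      case z then show ?thesis by simp
    next
      case f
      have e: "{w\<in>Sn n. inv w 1 \<le> t \<and> t < inv w n} = {}"
        using sn_inv_range[of _ n n] n2 f by fastforce
      have "(\<Sum>m=1..t. psi n \<zeta> m) = 0"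
        using psi_partial[where n=n and k=t and \<zeta>=\<zeta>] n2 unfolding e by simp
      moreover have "gg p n t n = 0" unfolding gg_def f by simp
      ultimately show ?thesis using T by simp
    next
      case m
      show ?thesis using main_k[OF n2 p0 p1 m st] T unfolding c0_def by simp
    qed
  qed
  have "\<forall>m\<in>{1..n}. psi n \<zeta> m = c0 * target p n m"
  proof
    fix m assume m: "m \<in> {1..n}"
    then obtain m' where m': "m = Suc m'" by (cases m) auto
    have "psi n \<zeta> m = (\<Sum>i=1..m. psi n \<zeta> i) - (\<Sum>i=1..m'. psi n \<zeta> i)"
      unfolding m' by (simp add: sum.cl_ivl_Suc)
    also have "\<dots> = c0 * ((\<Sum>i=1..m. target p n i) - (\<Sum>i=1..m'. target p n i))"
      using Pk[of m] Pk[of m'] m m' by (simp add: algebra_simps)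
    also have "\<dots> = c0 * target p n m"
      unfolding m' by (simp add: sum.cl_ivl_Suc)
    finally show "psi n \<zeta> m = c0 * target p n m" .
  qed
  then show ?thesis using c0 by blast
qed

end
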